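(* Let $r\in[0,1]$ and $n\in\mathbb{N}$. If $\omega=(\omega_1,\dots,\omega_n)$ and $\nu=(\nu_1,\dots,\nu_n)$ are distinct elements of $\{0,1\}^n$ with $[\omega]_r\cap[\nu]_r\neq\emptyset$, then there is a unique $i\in\{1,\dots,n\}$ with $\omega_i\neq\nu_i$, and $\omega_j=\nu_j$ for all $j\neq i$.
   Context: For $r\in[0,1]$, $f_{r,0}(x)=\frac{x}{2-r+rx}$ and $f_{r,1}(x)=\frac{1+(1-r)(1-x)}{2-r+rx}$ are the inverse branches of the map $T_r:[0,1]\to[0,1]$, $T_r(x)=\frac{(2-r)x}{1-rx}$ ($x\le1/2$), $T_r(x)=\frac{(2-r)(1-x)}{1-r+rx}$ ($x>1/2$). For $\varphi=(\varphi_1,\dots,\varphi_n)\in\{0,1\}^n$, $f_{r,\varphi}=f_{r,\varphi_1}\circ\cdots\circ f_{r,\varphi_n}$ and the cylinder set is $[\varphi]_r=f_{r,\varphi}([0,1])$. *)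

theory Defs
  imports Complex_Main
begin

text \<open>Inverse branches of T_r. Digits are natural numbers 0 or 1.\<close>
definition f0 :: "real \<Rightarrow> real \<Rightarrow> real" where
  "f0 r x = x / (2 - r + r * x)"

definition f1 :: "real \<Rightarrow> real \<Rightarrow> real" where
  "f1 r x = (1 + (1 - r) * (1 - x)) / (2 - r + r * x)"

definition fdigit :: "real \<Rightarrow> nat \<Rightarrow> real \<Rightarrow> real" where
  "fdigit r a = (if a = 0 then f0 r else f1 r)"

text \<open>f_{r,phi} = f_{r,phi_1} o ... o f_{r,phi_n}, words as lists (phi_1 is the head).\<close>
fun fword :: "real \<Rightarrow> nat list \<Rightarrow> real \<Rightarrow> real" where
  "fword r [] = id"
| "fword r (a # w) = fdigit r a \<circ> fword r w"

definition cylinder :: "real \<Rightarrow> nat list \<Rightarrow> real set" where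
  "cylinder r w = fword r w ` {0..1}"

end

theory Submission
  imports Defs
begin

lemma den_pos: "0 \<le> (r::real) \<Longrightarrow> r \<le> 1 \<Longrightarrow> 0 \<le> t \<Longrightarrow> t \<le> 1 \<Longrightarrow> 1 \<le> 2 - r + r * t"
proof -
  assume "0 \<le> r" "r \<le> 1" "0 \<le> t" "t \<le> 1"
  then have "0 \<le> r * t" by simp
  then show ?thesis using \<open>r \<le> 1\<close> by linarith
qed

lemma f0_range: assumes "0 \<le> r" "r \<le> 1" "0 \<le> t" "t \<le> 1"
  shows "0 \<le> f0 r t \<and> f0 r t \<le> 1/2"
proof -
  have d: "1 \<le> 2 - r + r * t" using den_pos assms by blast
  have p: "0 \<le> (2 - r) * (1 - t)" using assms by simp
  have "2 * t \<le> 2 - r + r * t" using p by (simp add: algebra_simps)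
  then show ?thesis using d assms unfolding f0_def by (simp add: field_simps)
qed

lemma f1_range: assumes "0 \<le> r" "r \<le> 1" "0 \<le> t" "t \<le> 1"
  shows "1/2 \<le> f1 r t \<and> f1 r t \<le> 1"
proof -
  have d: "1 \<le> 2 - r + r * t" using den_pos assms by blast
  have p1: "0 \<le> (1 - r) * (1 - t)" using assms by simp
  have p2: "0 \<le> r * (1 - t)" using assms by simp
  have a: "2 - r + r * t \<le> 2 * (1 + (1 - r) * (1 - t))"
    using p1 p2 by (simp add: algebra_simps)
  have b: "1 + (1 - r) * (1 - t) \<le> 2 - r + r * t"
    using assms by (simp add: algebra_simps)
  show ?thesis using d a b unfolding f1_def by (simp add: field_simps)
qed

lemma f0_eq0: assumes "0 \<le> r" "r \<le> 1" "0 \<le> t" "t \<le> 1" "f0 r t = 0" shows "t = 0"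
proof -
  have d: "1 \<le> 2 - r + r * t" using den_pos assms by blast
  then show ?thesis using assms(5) unfolding f0_def by simp
qed

lemma f1_eq1: assumes "0 \<le> r" "r \<le> 1" "0 \<le> t" "t \<le> 1" "f1 r t = 1" shows "t = 0"
proof -
  have d: "1 \<le> 2 - r + r * t" using den_pos assms by blast
  then have "1 + (1 - r) * (1 - t) = 2 - r + r * t" using assms(5) unfolding f1_def by (simp add: field_simps)
  then show ?thesis by (simp add: algebra_simps)
qed

lemma f0_half: assumes "0 \<le> r" "r \<le> 1" "0 \<le> t" "t \<le> 1" "f0 r t = 1/2" shows "t = 1"
proof -
  have d: "1 \<le> 2 - r + r * t" using den_pos assms by blast
  then have "2 * t = 2 - r + r * t" using assms(5) unfolding f0_def by (simp add: field_simps)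
  then have "(2 - r) * (t - 1) = 0" by (simp add: algebra_simps)
  then show ?thesis using assms by auto
qed

lemma f1_half: assumes "0 \<le> r" "r \<le> 1" "0 \<le> t" "t \<le> 1" "f1 r t = 1/2" shows "t = 1"
proof -
  have d: "1 \<le> 2 - r + r * t" using den_pos assms by blast
  then have "2 * (1 + (1 - r) * (1 - t)) = 2 - r + r * t" using assms(5) unfolding f1_def by (simp add: field_simps)
  then have "(2 - r) * (t - 1) = 0" by (simp add: algebra_simps)
  then show ?thesis using assms by auto
qed

lemma f0_inj: assumes "0 \<le> r" "r \<le> 1" "0 \<le> s" "s \<le> 1" "0 \<le> t" "t \<le> 1" "f0 r s = f0 r t"
  shows "s = t"
proof -
  have d1: "1 \<le> 2 - r + r * t" using den_pos assms by blast
  have d2: "1 \<le> 2 - r + r * s" using den_pos assms by blast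
  have "s * (2 - r + r * t) = t * (2 - r + r * s)" using d1 d2 assms(7) unfolding f0_def
    by (simp add: field_simps)
  then have "(2 - r) * (s - t) = 0" by (simp add: algebra_simps)
  then show ?thesis using assms by auto
qed

lemma f1_inj: assumes "0 \<le> r" "r \<le> 1" "0 \<le> s" "s \<le> 1" "0 \<le> t" "t \<le> 1" "f1 r s = f1 r t"
  shows "s = t"
proof -
  have d1: "1 \<le> 2 - r + r * t" using den_pos assms by blast
  have d2: "1 \<le> 2 - r + r * s" using den_pos assms by blast
  have "(1 + (1 - r) * (1 - s)) * (2 - r + r * t) = (1 + (1 - r) * (1 - t)) * (2 - r + r * s)"
    using d1 d2 assms(7) unfolding f1_def by (simp add: field_simps)
  then have "(2 - r) * (s - t) = 0" by (simp add: algebra_simps)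
  then show ?thesis using assms by auto
qed

lemma fword_range: assumes "0 \<le> r" "r \<le> 1" "0 \<le> y" "y \<le> 1"
  shows "0 \<le> fword r w y \<and> fword r w y \<le> 1"
  using assms
proof (induction w)
  case Nil then show ?case by simp
next
  case (Cons a w)
  then show ?case using f0_range[of r "fword r w y"] f1_range[of r "fword r w y"]
    by (auto simp: fdigit_def)
qed

lemma fword_0: assumes "0 \<le> r" "r \<le> 1" "0 \<le> y" "y \<le> 1" "set w \<subseteq> {0,1}" "fword r w y = 0"
  shows "w = replicate (length w) 0"
  using assms
proof (induction w)
  case Nil then show ?case by simp
next
  case (Cons a w)
  have R: "0 \<le> fword r w y \<and> fword r w y \<le> 1" using fword_range Cons by blast
  show ?case
  proof (cases "a = 0")
    case True
    then have "f0 r (fword r w y) = 0" using Cons by (simp add: fdigit_def)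
    then have "fword r w y = 0" using f0_eq0 R Cons by blast
    then show ?thesis using Cons True by simp
  next
    case False
    then have "f1 r (fword r w y) = 0" using Cons by (simp add: fdigit_def)
    then show ?thesis using f1_range[of r "fword r w y"] R Cons by simp
  qed
qed

lemma fword_1: assumes "0 \<le> r" "r \<le> 1" "0 \<le> y" "y \<le> 1" "set w \<subseteq> {0,1}" "fword r w y = 1"
  "w \<noteq> []"
  shows "w = 1 # replicate (length w - 1) 0"
proof (cases w)
  case Nil then show ?thesis using assms by simp
next
  case (Cons a v)
  have R: "0 \<le> fword r v y \<and> fword r v y \<le> 1" using fword_range assms by blast
  show ?thesis
  proof (cases "a = 0")
    case True
    then have "f0 r (fword r v y) = 1" using assms Cons by (simp add: fdigit_def)
    then show ?thesis using f0_range[of r "fword r v y"] R assms by simp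
  next
    case False
    then have a1: "a = 1" using assms Cons by auto
    then have "f1 r (fword r v y) = 1" using assms Cons by (simp add: fdigit_def)
    then have "fword r v y = 0" using f1_eq1 R assms by blast
    then have "v = replicate (length v) 0" using fword_0 assms Cons by auto
    then show ?thesis using Cons a1 by simp
  qed
qed

lemma main_exists:
  assumes "0 \<le> r" "r \<le> 1"
    and "length \<omega> = length \<nu>"
    and "set \<omega> \<subseteq> {0, 1}" "set \<nu> \<subseteq> {0, 1}"
    and "\<omega> \<noteq> \<nu>"
    and "y \<in> {0..1}" "z \<in> {0..1}" "fword r \<omega> y = fword r \<nu> z"
  shows "\<exists>i. i < length \<omega> \<and> \<omega> ! i \<noteq> \<nu> ! i \<and> (\<forall>j<length \<omega>. j \<noteq> i \<longrightarrow> \<omega> ! j = \<nu> ! j)"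
  using assms
proof (induction \<omega> arbitrary: \<nu>)
  case Nil then show ?case by simp
next
  case (Cons a w)
  then obtain b v where nu: "\<nu> = b # v" by (cases \<nu>) auto
  have Ry: "0 \<le> fword r w y \<and> fword r w y \<le> 1" using fword_range Cons.prems by auto
  have Rz: "0 \<le> fword r v z \<and> fword r v z \<le> 1" using fword_range Cons.prems by auto
  have ab: "a \<in> {0,1}" "b \<in> {0,1}" using Cons.prems nu by auto
  have eq: "fdigit r a (fword r w y) = fdigit r b (fword r v z)" using Cons.prems nu by simp
  show ?case
  proof (cases "a = b")
    case True
    have feq: "fword r w y = fword r v z"
    proof (cases "a = 0")
      case True
      then have "f0 r (fword r w y) = f0 r (fword r v z)" using eq \<open>a = b\<close> by (simp add: fdigit_def)
      then show ?thesis using Ry Rz f0_inj[OF Cons.prems(1,2), of "fword r w y" "fword r v z"] by blast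
    next
      case False
      then have "f1 r (fword r w y) = f1 r (fword r v z)" using eq \<open>a = b\<close> by (simp add: fdigit_def)
      then show ?thesis using Ry Rz f1_inj[OF Cons.prems(1,2), of "fword r w y" "fword r v z"] by blast
    qed
    have wv: "w \<noteq> v" using Cons.prems(6) nu True by simp
    have l: "length w = length v" "set w \<subseteq> {0,1}" "set v \<subseteq> {0,1}" using Cons.prems(3,4,5) nu by auto
    obtain i where i: "i < length w" "w ! i \<noteq> v ! i" "\<forall>j<length w. j \<noteq> i \<longrightarrow> w ! j = v ! j"
      using Cons.IH[of v, OF Cons.prems(1,2) l wv Cons.prems(7,8) feq] by blast
    show ?thesis
    proof (intro exI[of _ "Suc i"] conjI allI impI)
      show "Suc i < length (a # w)" using i by simp
      show "(a # w) ! Suc i \<noteq> \<nu> ! Suc i" using i nu by simp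
      fix j assume "j < length (a # w)" "j \<noteq> Suc i"
      then show "(a # w) ! j = \<nu> ! j" using i nu True by (cases j) auto
    qed
  next
    case False
    have hw: "fword r w y = 1 \<and> fword r v z = 1"
    proof (cases "a = 0")
      case True
      then have b1: "b = 1" using ab False by auto
      have "f0 r (fword r w y) = f1 r (fword r v z)" using eq True b1 by (simp add: fdigit_def)
      then have "f0 r (fword r w y) = 1/2 \<and> f1 r (fword r v z) = 1/2"
        using f0_range[of r "fword r w y"] f1_range[of r "fword r v z"] Ry Rz Cons.prems by auto
      then show ?thesis using Ry Rz f0_half[OF Cons.prems(1,2), of "fword r w y"] f1_half[OF Cons.prems(1,2), of "fword r v z"]
        f1_half[OF Cons.prems(1,2), of "fword r w y"] f0_half[OF Cons.prems(1,2), of "fword r v z"] by auto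
    next
      case False
      then have a1: "a = 1" and b0: "b = 0" using ab \<open>a \<noteq> b\<close> by auto
      have "f1 r (fword r w y) = f0 r (fword r v z)" using eq a1 b0 by (simp add: fdigit_def)
      then have "f1 r (fword r w y) = 1/2 \<and> f0 r (fword r v z) = 1/2"
        using f1_range[of r "fword r w y"] f0_range[of r "fword r v z"] Ry Rz Cons.prems by auto
      then show ?thesis using Ry Rz f0_half[OF Cons.prems(1,2), of "fword r w y"] f1_half[OF Cons.prems(1,2), of "fword r v z"]
        f1_half[OF Cons.prems(1,2), of "fword r w y"] f0_half[OF Cons.prems(1,2), of "fword r v z"] by auto
    qed
    have wv: "w = v"
    proof (cases "w = []")
      case True then show ?thesis using Cons.prems nu by simp
    next
      case False
      then have "v \<noteq> []" using Cons.prems nu by auto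
      then have B: "v = 1 # replicate (length v - 1) 0" using fword_1[of r z v] hw Cons.prems nu by auto
      have A: "w = 1 # replicate (length w - 1) 0" using fword_1[of r y w] hw Cons.prems False by auto
      have L: "length w = length v" using Cons.prems nu by simp
      have E: "1 # replicate (length w - 1) 0 = 1 # replicate (length v - 1) (0::nat)" using L by simp
      show ?thesis by (rule trans[OF A trans[OF E B[symmetric]]])
    qed
    show ?thesis
    proof (intro exI[of _ 0] conjI allI impI)
      show "0 < length (a # w)" by simp
      show "(a # w) ! 0 \<noteq> \<nu> ! 0" using nu False by simp
      fix j assume "j < length (a # w)" "j \<noteq> 0"
      then show "(a # w) ! j = \<nu> ! j" using wv nu by (cases j) auto
    qed
  qed
qed

theorem lemma4p1:
  fixes r :: real and n :: nat and \<omega> \<nu> :: "nat list"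
  assumes "0 \<le> r" "r \<le> 1"
    and "length \<omega> = n" "length \<nu> = n"
    and "set \<omega> \<subseteq> {0, 1}" "set \<nu> \<subseteq> {0, 1}"
    and "\<omega> \<noteq> \<nu>"
    and "cylinder r \<omega> \<inter> cylinder r \<nu> \<noteq> {}"
  shows "\<exists>!i. i < n \<and> \<omega> ! i \<noteq> \<nu> ! i \<and> (\<forall>j<n. j \<noteq> i \<longrightarrow> \<omega> ! j = \<nu> ! j)"
proof -
  obtain y z where "y \<in> {0..1}" "z \<in> {0..1}" "fword r \<omega> y = fword r \<nu> z"
    using assms(8) unfolding cylinder_def by blast
  then obtain i where i: "i < n \<and> \<omega> ! i \<noteq> \<nu> ! i \<and> (\<forall>j<n. j \<noteq> i \<longrightarrow> \<omega> ! j = \<nu> ! j)"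
    using main_exists[of r \<omega> \<nu> y z] assms by auto
  show ?thesis
  proof (rule ex1I[of _ i])
    show "i < n \<and> \<omega> ! i \<noteq> \<nu> ! i \<and> (\<forall>j<n. j \<noteq> i \<longrightarrow> \<omega> ! j = \<nu> ! j)" by (rule i)
    fix k assume "k < n \<and> \<omega> ! k \<noteq> \<nu> ! k \<and> (\<forall>j<n. j \<noteq> k \<longrightarrow> \<omega> ! j = \<nu> ! j)"
    then show "k = i" using i by blast
  qed
qed

end
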